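(* Let $R(m,n)$ be a rectangular supergrid graph with $m\ge 3$ and $n\ge 2$, and let $s=w=(1,1)$, $t=z=(2,1)$ and $f=(3,1)$. Then there exists a Hamiltonian $(s,t)$-path $P$ of $R(m,n)$ such that the edge $(z,f)$ belongs to $P$.
   Context: The rectangular supergrid graph $R(m,n)$ has vertex set $\{(x,y)\in\mathbb{Z}^2:1\le x\le m,\ 1\le y\le n\}$, two distinct vertices $u,v$ being adjacent iff $|u_x-v_x|\le 1$ and $|u_y-v_y|\le 1$. A Hamiltonian $(s,t)$-path is a simple path from $s$ to $t$ visiting every vertex exactly once. *)

theory Defs
  imports Main
begin

definition supergrid_vertices :: "int \<Rightarrow> int \<Rightarrow> (int \<times> int) set" where
  "supergrid_vertices m n = {(x, y). 1 \<le> x \<and> x \<le> m \<and> 1 \<le> y \<and> y \<le> n}"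

definition supergrid_adj :: "int \<Rightarrow> int \<Rightarrow> int \<times> int \<Rightarrow> int \<times> int \<Rightarrow> bool" where
  "supergrid_adj m n u v \<longleftrightarrow> u \<in> supergrid_vertices m n \<and> v \<in> supergrid_vertices m n \<and>
     u \<noteq> v \<and> \<bar>fst u - fst v\<bar> \<le> 1 \<and> \<bar>snd u - snd v\<bar> \<le> 1"

definition hamiltonian_path :: "int \<Rightarrow> int \<Rightarrow> int \<times> int \<Rightarrow> int \<times> int \<Rightarrow> (int \<times> int) list \<Rightarrow> bool" where
  "hamiltonian_path m n s t P \<longleftrightarrow> P \<noteq> [] \<and> hd P = s \<and> last P = t \<and> distinct P \<and>
     set P = supergrid_vertices m n \<and>
     (\<forall>i. Suc i < length P \<longrightarrow> supergrid_adj m n (P ! i) (P ! Suc i))"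

definition edge_on_path :: "(int \<times> int) list \<Rightarrow> int \<times> int \<Rightarrow> int \<times> int \<Rightarrow> bool" where
  "edge_on_path P u v \<longleftrightarrow> (\<exists>i. Suc i < length P \<and>
     ((P ! i = u \<and> P ! Suc i = v) \<or> (P ! i = v \<and> P ! Suc i = u)))"

end

theory Submission
  imports Defs
begin

definition nb :: "int \<times> int \<Rightarrow> int \<times> int \<Rightarrow> bool" where
  "nb u v \<longleftrightarrow> u \<noteq> v \<and> \<bar>fst u - fst v\<bar> \<le> 1 \<and> \<bar>snd u - snd v\<bar> \<le> 1"

fun cd :: "int \<Rightarrow> int \<Rightarrow> nat \<Rightarrow> (int \<times> int) list" where
  "cd a y 0 = []" | "cd a y (Suc k) = (a,y) # cd a (y-1) k"
fun cu :: "int \<Rightarrow> int \<Rightarrow> nat \<Rightarrow> (int \<times> int) list" where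
  "cu a y 0 = []" | "cu a y (Suc k) = (a,y) # cu a (y+1) k"
fun zu :: "int \<Rightarrow> int \<Rightarrow> nat \<Rightarrow> (int \<times> int) list" where
  "zu a y 0 = []" | "zu a y (Suc k) = (a,y) # (a+1,y) # zu a (y+1) k"
fun zd :: "int \<Rightarrow> int \<Rightarrow> nat \<Rightarrow> (int \<times> int) list" where
  "zd a y 0 = []" | "zd a y (Suc k) = (a+1,y) # (a,y) # zd a (y-1) k"

lemma cd_len[simp]: "length (cd a y k) = k" by (induction k arbitrary: y) auto
lemma cu_len[simp]: "length (cu a y k) = k" by (induction k arbitrary: y) auto
lemma zu_len[simp]: "length (zu a y k) = 2*k" by (induction k arbitrary: y) auto
lemma zd_len[simp]: "length (zd a y k) = 2*k" by (induction k arbitrary: y) auto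

lemma cd_mem: "(x,z) \<in> set (cd a y k) \<longleftrightarrow> x = a \<and> y - int k < z \<and> z \<le> y"
  by (induction k arbitrary: y) (simp_all, linarith)
lemma cu_mem: "(x,z) \<in> set (cu a y k) \<longleftrightarrow> x = a \<and> y \<le> z \<and> z < y + int k"
  by (induction k arbitrary: y) (simp_all, linarith)
lemma zu_mem: "(x,z) \<in> set (zu a y k) \<longleftrightarrow> (x = a \<or> x = a+1) \<and> y \<le> z \<and> z < y + int k"
  by (induction k arbitrary: y) (simp_all, linarith)
lemma zd_mem: "(x,z) \<in> set (zd a y k) \<longleftrightarrow> (x = a \<or> x = a+1) \<and> y - int k < z \<and> z \<le> y"
  by (induction k arbitrary: y) (simp_all, linarith)

lemma cd_hd': "cd a y k \<noteq> [] \<Longrightarrow> hd (cd a y k) = (a, y)" by (cases k) auto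
lemma cd_hd: "k > 0 \<Longrightarrow> hd (cd a y k) = (a, y)" by (cases k) auto
lemma cu_hd': "cu a y k \<noteq> [] \<Longrightarrow> hd (cu a y k) = (a, y)" by (cases k) auto
lemma cu_hd: "k > 0 \<Longrightarrow> hd (cu a y k) = (a, y)" by (cases k) auto
lemma zu_hd': "zu a y k \<noteq> [] \<Longrightarrow> hd (zu a y k) = (a, y)" by (cases k) auto
lemma zu_hd: "k > 0 \<Longrightarrow> hd (zu a y k) = (a, y)" by (cases k) auto
lemma zd_hd': "zd a y k \<noteq> [] \<Longrightarrow> hd (zd a y k) = (a+1, y)" by (cases k) auto
lemma zd_hd: "k > 0 \<Longrightarrow> hd (zd a y k) = (a+1, y)" by (cases k) auto

lemma cd_succ: "successively nb (cd a y k)"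
  by (induction k arbitrary: y) (auto simp: successively_Cons nb_def cd_hd')
lemma cu_succ: "successively nb (cu a y k)"
  by (induction k arbitrary: y) (auto simp: successively_Cons nb_def cu_hd')
lemma zu_succ: "successively nb (zu a y k)"
  by (induction k arbitrary: y) (auto simp: successively_Cons nb_def zu_hd')
lemma zd_succ: "successively nb (zd a y k)"
  by (induction k arbitrary: y) (auto simp: successively_Cons nb_def zd_hd')

lemma cd_last: "0 < k \<Longrightarrow> last (cd a y k) = (a, y - int k + 1)"
proof (induction k arbitrary: y)
  case (Suc k)
  show ?case
  proof (cases k)
    case 0 thus ?thesis by simp
  next
    case (Suc j)
    hence "cd a (y-1) k \<noteq> []" by simp
    thus ?thesis using Suc.IH[of "y-1"] Suc by simp
  qed
qed simp
lemma cu_last: "0 < k \<Longrightarrow> last (cu a y k) = (a, y + int k - 1)"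
proof (induction k arbitrary: y)
  case (Suc k)
  show ?case
  proof (cases k)
    case 0 thus ?thesis by simp
  next
    case (Suc j)
    hence "cu a (y+1) k \<noteq> []" by simp
    thus ?thesis using Suc.IH[of "y+1"] Suc by simp
  qed
qed simp
lemma zu_last: "0 < k \<Longrightarrow> last (zu a y k) = (a+1, y + int k - 1)"
proof (induction k arbitrary: y)
  case (Suc k)
  show ?case
  proof (cases k)
    case 0 thus ?thesis by simp
  next
    case (Suc j)
    hence "zu a (y+1) k \<noteq> []" by simp
    thus ?thesis using Suc.IH[of "y+1"] Suc by simp
  qed
qed simp
lemma zd_last: "0 < k \<Longrightarrow> last (zd a y k) = (a, y - int k + 1)"
proof (induction k arbitrary: y)
  case (Suc k)
  show ?case
  proof (cases k)
    case 0 thus ?thesis by simp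
  next
    case (Suc j)
    hence "zd a (y-1) k \<noteq> []" by simp
    thus ?thesis using Suc.IH[of "y-1"] Suc by simp
  qed
qed simp


lemma ham_iff:
  "hamiltonian_path m n s t P \<longleftrightarrow> P \<noteq> [] \<and> hd P = s \<and> last P = t \<and> distinct P \<and>
     set P = supergrid_vertices m n \<and> successively nb P"
proof -
  have "set P = supergrid_vertices m n \<Longrightarrow>
    (\<forall>i. Suc i < length P \<longrightarrow> supergrid_adj m n (P ! i) (P ! Suc i)) \<longleftrightarrow> successively nb P"
    unfolding successively_conv_nth supergrid_adj_def nb_def
    by (metis Suc_lessD nth_mem)
  thus ?thesis unfolding hamiltonian_path_def by blast
qed

lemma V_eq: "supergrid_vertices m n = {1..m} \<times> {1..n}"
  unfolding supergrid_vertices_def by auto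

lemma card_V: "card (supergrid_vertices m n) = nat m * nat n"
  unfolding V_eq card_cartesian_product by simp

lemma dist_card: "set P = supergrid_vertices m n \<Longrightarrow> length P = nat m * nat n \<Longrightarrow> distinct P"
  by (metis card_V card_distinct)

lemma succ_ins:
  assumes "successively R (xs@u#v#ys)" "successively R (u#B@[v])"
  shows "successively R (xs@u#B@v#ys)"
proof -
  have a: "successively R (xs@[u])" "successively R (v#ys)"
    using assms(1) successively_append_iff[of R "xs@[u]" "v#ys"] by auto
  have "successively R ((xs@[u]) @ (B@[v]))"
    using a(1) assms(2) successively_append_iff[of R "xs@[u]" "B@[v]"]
    by (cases B) (auto simp: successively_Cons)
  hence "successively R ((xs@u#B@[v]) @ ys)"
    using a(2) successively_append_iff[of R "xs@u#B@[v]" ys]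
    by (cases ys) (auto simp: successively_Cons)
  thus ?thesis by simp
qed

lemma ends_ins:
  assumes "ys \<noteq> []" "xs@u#v#ys = zs@[a,b]"
  shows "\<exists>zs'. xs@u#B@v#ys = zs'@[a,b]"
proof -
  obtain ys0 y where ys: "ys = ys0 @ [y]" using assms(1) by (metis rev_exhaust)
  show ?thesis
  proof (cases ys0 rule: rev_cases)
    case Nil
    then show ?thesis using assms(2) ys by auto
  next
    case (snoc ys1 w)
    then show ?thesis using assms(2) ys by auto
  qed
qed

definition I :: "int \<Rightarrow> int \<Rightarrow> (int \<times> int) list \<Rightarrow> bool" where
  "I m n P \<longleftrightarrow> hamiltonian_path m n (1,1) (2,1) P \<and> (\<exists>xs ys. P = xs @ (m,n)#(m,n-1)#ys)
     \<and> (\<exists>zs. P = zs @ [(3,1),(2,1)])"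

lemma base3:
  assumes n: "n \<ge> 2"
  shows "\<exists>P. I 3 n P"
proof -
  define k where "k = nat (n-1)"
  define N where "N = nat n"
  have kp: "0 < k" "int k = n - 1" using n by (auto simp: k_def)
  have Np: "0 < N" "int N = n" using n by (auto simp: N_def)
  define P where "P = (1,1) # zu 1 2 k @ cd 3 n N @ [(2,1)]"
  have set: "set P = supergrid_vertices 3 n"
  proof (rule set_eqI)
    fix p :: "int \<times> int"
    obtain x z where p: "p = (x,z)" by fastforce
    show "p \<in> set P \<longleftrightarrow> p \<in> supergrid_vertices 3 n"
      unfolding p P_def supergrid_vertices_def using kp Np
      by (auto simp: zu_mem cd_mem)
  qed
  have len: "length P = nat 3 * nat n"
    unfolding P_def using kp Np by simp
  have ne1: "zu 1 2 k \<noteq> []" using kp(1) by (cases k) simp_all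
  have ne2: "cd 3 n N \<noteq> []" using Np(1) by (cases N) simp_all
  note ne = ne1 ne2
  have L: "hd (zu 1 2 k) = (1,2)" "last (zu 1 2 k) = (2,n)" "hd (cd 3 n N) = (3,n)" "last (cd 3 n N) = (3,1)"
    using zu_hd[of k 1 2] zu_last[of k 1 2] cd_hd[of N 3 n] cd_last[of N 3 n] kp Np by simp_all
  have h1: "nb (1,1) (1,2)" "nb (2,n) (3,n)" "nb (3,1) (2,1)" by (simp_all add: nb_def)
  have succ: "successively nb P"
    unfolding P_def using ne L h1
    by (simp add: successively_append_iff successively_Cons zu_succ cd_succ)
  have ham: "hamiltonian_path 3 n (1,1) (2,1) P"
  proof -
    have "P \<noteq> []" "hd P = (1,1)" "last P = (2,1)" by (simp_all add: P_def)
    thus ?thesis unfolding ham_iff using set succ dist_card[OF set len] by blast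
  qed
  define N' where "N' = N - 2"
  have N': "N = Suc (Suc N')" using n unfolding N'_def N_def by simp
  have e1: "P = ((1,1) # zu 1 2 k) @ (3,n)#(3,n-1)#(cd 3 (n-2) N' @ [(2,1)])"
    unfolding P_def N' by simp
  obtain B where c: "cd 3 n N = B @ [(3,1)]" using ne2 L(4) by (metis append_butlast_last_id)
  have e2: "P = ((1,1) # zu 1 2 k @ B) @ [(3,1),(2,1)]"
    unfolding P_def c by simp
  show ?thesis unfolding I_def using ham e1 e2 by blast
qed


lemma base4:
  assumes n: "n \<ge> 2"
  shows "\<exists>P. I 4 n P"
proof -
  define k where "k = nat (n-1)"
  have kp: "0 < k" "int k = n - 1" using n by (auto simp: k_def)
  define P where "P = (1,1) # zu 1 2 k @ (3,n) # (4,n) # zd 3 (n-1) k @ [(2,1)]"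
  have set: "set P = supergrid_vertices 4 n"
  proof (rule set_eqI)
    fix p :: "int \<times> int"
    obtain x z where p: "p = (x,z)" by fastforce
    show "p \<in> set P \<longleftrightarrow> p \<in> supergrid_vertices 4 n"
      unfolding p P_def supergrid_vertices_def using kp n
      by (auto simp: zu_mem zd_mem)
  qed
  have len: "length P = nat 4 * nat n"
    unfolding P_def using kp by simp
  have ne1: "zu 1 2 k \<noteq> []" using kp(1) by (cases k) simp_all
  have ne2: "zd 3 (n-1) k \<noteq> []" using kp(1) by (cases k) simp_all
  have L: "hd (zu 1 2 k) = (1,2)" "last (zu 1 2 k) = (2,n)" "hd (zd 3 (n-1) k) = (4,n-1)"
     "last (zd 3 (n-1) k) = (3,1)"
    using zu_hd[of k 1 2] zu_last[of k 1 2] zd_hd[of k 3 "n-1"] zd_last[of k 3 "n-1"] kp by simp_all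
  have h1: "nb (1,1) (1,2)" "nb (2,n) (3,n)" "nb (3,n) (4,n)" "nb (4,n) (4,n-1)" "nb (3,1) (2,1)"
    by (simp_all add: nb_def)
  have succ: "successively nb P"
    unfolding P_def using ne1 ne2 L h1
    by (simp add: successively_append_iff successively_Cons zu_succ zd_succ)
  have ham: "hamiltonian_path 4 n (1,1) (2,1) P"
  proof -
    have "P \<noteq> []" "hd P = (1,1)" "last P = (2,1)" by (simp_all add: P_def)
    thus ?thesis unfolding ham_iff using set succ dist_card[OF set len] by blast
  qed
  define k' where "k' = k - 1"
  have k': "k = Suc k'" using kp unfolding k'_def by simp
  have e1: "P = ((1,1) # zu 1 2 k @ [(3,n)]) @ (4,n)#(4,n-1)#((3,n-1) # zd 3 (n-1-1) k' @ [(2,1)])"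
    unfolding P_def by (subst (2) k') simp
  obtain B where c: "zd 3 (n-1) k = B @ [(3,1)]" using ne2 L(4) by (metis append_butlast_last_id)
  have e2: "P = ((1,1) # zu 1 2 k @ (3,n) # (4,n) # B) @ [(3,1),(2,1)]"
    unfolding P_def c by simp
  show ?thesis unfolding I_def using ham e1 e2 by fastforce
qed

lemma step:
  assumes m: "m \<ge> 3" and n: "n \<ge> 2" and IP: "I m n P"
  shows "\<exists>P'. I (m+2) n P'"
proof -
  obtain xs ys where P: "P = xs @ (m,n)#(m,n-1)#ys" using IP unfolding I_def by blast
  obtain zs where Z: "P = zs @ [(3,1),(2,1)]" using IP unfolding I_def by blast
  have hp: "hamiltonian_path m n (1,1) (2,1) P" using IP unfolding I_def by blast
  hence hp': "P \<noteq> []" "hd P = (1,1)" "last P = (2,1)" "distinct P" "set P = supergrid_vertices m n"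
    "successively nb P" unfolding ham_iff by blast+
  define k where "k = nat (n-1)"
  define N where "N = nat n"
  have kp: "0 < k" "int k = n - 1" using n by (auto simp: k_def)
  have Np: "0 < N" "int N = n" using n by (auto simp: N_def)
  define B where "B = (m+1,n) # cd (m+2) n N @ cu (m+1) 1 k"
  define P' where "P' = xs @ (m,n) # B @ (m,n-1) # ys"
  have lenP: "length P = nat m * nat n"
    using hp'(4,5) card_V distinct_card by metis
  have len: "length P' = nat (m+2) * nat n"
  proof -
    have "length P' = length P + 1 + N + k" unfolding P'_def P B_def by simp
    also have "\<dots> = nat m * nat n + 2 * nat n" using lenP kp Np N_def by simp
    also have "\<dots> = nat (m+2) * nat n" using m by (simp add: nat_add_distrib algebra_simps)
    finally show ?thesis .
  qed
  have setB: "set P' = set P \<union> set B" unfolding P'_def P by auto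
  have set: "set P' = supergrid_vertices (m+2) n"
  proof (rule set_eqI)
    fix p :: "int \<times> int"
    obtain x z where p: "p = (x,z)" by fastforce
    show "p \<in> set P' \<longleftrightarrow> p \<in> supergrid_vertices (m+2) n"
      unfolding p setB hp'(5) B_def supergrid_vertices_def using kp Np m n
      by (auto simp: cd_mem cu_mem)
  qed
  have ne2: "cd (m+2) n N \<noteq> []" using Np(1) by (cases N) simp_all
  have ne3: "cu (m+1) 1 k \<noteq> []" using kp(1) by (cases k) simp_all
  have L: "hd (cd (m+2) n N) = (m+2,n)" "last (cd (m+2) n N) = (m+2,1)"
    "hd (cu (m+1) 1 k) = (m+1,1)" "last (cu (m+1) 1 k) = (m+1,n-1)"
    using cd_hd[of N "m+2" n] cd_last[of N "m+2" n] cu_hd[of k "m+1" 1] cu_last[of k "m+1" 1] kp Np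
    by simp_all
  have h1: "nb (m,n) (m+1,n)" "nb (m+1,n) (m+2,n)" "nb (m+2,1) (m+1,1)" "nb (m+1,n-1) (m,n-1)"
    by (simp_all add: nb_def)
  have sB: "successively nb ((m,n) # B @ [(m,n-1)])"
    unfolding B_def using ne2 ne3 L h1
    by (simp add: successively_append_iff successively_Cons cd_succ cu_succ)
  have succ: "successively nb P'"
    unfolding P'_def using succ_ins[of nb xs "(m,n)" "(m,n-1)" ys B] hp'(6) P sB by simp
  have xsne: "xs \<noteq> []"
  proof
    assume "xs = []" thus False using hp'(2) P m by simp
  qed
  have ysne: "ys \<noteq> []"
  proof
    assume "ys = []" thus False using hp'(3) P m by simp
  qed
  have ham: "hamiltonian_path (m+2) n (1,1) (2,1) P'"
  proof -
    have "P' \<noteq> []" "hd P' = (1,1)" "last P' = (2,1)"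
      using hp'(2,3) P xsne ysne by (simp_all add: P'_def)
    thus ?thesis unfolding ham_iff using set succ dist_card[OF set len] by blast
  qed
  define N' where "N' = N - 2"
  have N': "N = Suc (Suc N')" using n unfolding N'_def N_def by simp
  have e1: "P' = (xs @ [(m,n), (m+1,n)]) @ (m+2,n)#(m+2,n-1)#(cd (m+2) (n-1-1) N' @ cu (m+1) 1 k @ (m,n-1) # ys)"
    unfolding P'_def B_def N' by simp
  have e2: "\<exists>zs'. P' = zs' @ [(3,1),(2,1)]"
    unfolding P'_def using ends_ins[OF ysne, of xs "(m,n)" "(m,n-1)" zs "(3,1)" "(2,1)" B] P Z
    by simp
  show ?thesis unfolding I_def using ham e1 e2 by fastforce
qed

lemma odd_case: "n \<ge> 2 \<Longrightarrow> \<exists>P. I (3 + 2 * int j) n P"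
proof (induction j)
  case 0 thus ?case using base3 by simp
next
  case (Suc j)
  then obtain P where "I (3 + 2 * int j) n P" by blast
  from step[OF _ Suc.prems this] show ?case by (simp add: algebra_simps)
qed

lemma even_case: "n \<ge> 2 \<Longrightarrow> \<exists>P. I (4 + 2 * int j) n P"
proof (induction j)
  case 0 thus ?case using base4 by simp
next
  case (Suc j)
  then obtain P where "I (4 + 2 * int j) n P" by blast
  from step[OF _ Suc.prems this] show ?case by (simp add: algebra_simps)
qed

theorem lemma4:
  fixes m n :: int
  assumes "m \<ge> 3" and "n \<ge> 2"
  shows "\<exists>P. hamiltonian_path m n (1, 1) (2, 1) P \<and> edge_on_path P (2, 1) (3, 1)"
proof -
  have "\<exists>P. I m n P"
  proof (cases "even m")
    case True
    define j where "j = nat ((m - 4) div 2)"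
    have h: "0 \<le> (m - 4) div 2" "m = 4 + 2 * ((m - 4) div 2)" using assms(1) True by presburger+
    hence "m = 4 + 2 * int j" unfolding j_def by simp
    thus ?thesis using even_case assms(2) by blast
  next
    case False
    define j where "j = nat ((m - 3) div 2)"
    have h: "0 \<le> (m - 3) div 2" "m = 3 + 2 * ((m - 3) div 2)" using assms(1) False by presburger+
    hence "m = 3 + 2 * int j" unfolding j_def by simp
    thus ?thesis using odd_case assms(2) by blast
  qed
  then obtain P where IP: "I m n P" by blast
  then obtain zs where Z: "P = zs @ [(3,1),(2,1)]" unfolding I_def by blast
  have "edge_on_path P (2, 1) (3, 1)"
    unfolding edge_on_path_def Z
    by (rule exI[of _ "length zs"]) (simp add: nth_append)
  thus ?thesis using IP unfolding I_def by blast
qed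

end
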